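(* Let $p$ be an odd prime, let $C_p$ be the cycle graph on $p$ vertices with adjacency matrix $A$, and let $a,b$ be any (possibly equal) vertices. Then there is a region $R\subseteq\mathbb{C}$ such that the curve $t\mapsto \exp(\mathrm{i}tA)_{a,b}$, $t\ge 0$, is dense in $R$ (as $t\to\infty$), and $R$ is invariant under the rotation of the plane about the origin by angle $2\pi/p$ (that is, $R$ has $p$-fold rotational symmetry). *)

theory Defs
  imports "HOL-Analysis.Analysis" "HOL-Computational_Algebra.Primes"
begin

text \<open>Square matrices of size n are represented as functions nat => nat => complex,
  only entries with indices below n being relevant.\<close>

definition mat_mult :: "nat \<Rightarrow> (nat \<Rightarrow> nat \<Rightarrow> complex) \<Rightarrow> (nat \<Rightarrow> nat \<Rightarrow> complex) \<Rightarrow> (nat \<Rightarrow> nat \<Rightarrow> complex)" where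
  "mat_mult n A B = (\<lambda>i j. \<Sum>k<n. A i k * B k j)"

definition mat_id :: "nat \<Rightarrow> nat \<Rightarrow> complex" where
  "mat_id = (\<lambda>i j. if i = j then 1 else 0)"

fun mat_pow :: "nat \<Rightarrow> (nat \<Rightarrow> nat \<Rightarrow> complex) \<Rightarrow> nat \<Rightarrow> (nat \<Rightarrow> nat \<Rightarrow> complex)" where
  "mat_pow n A 0 = mat_id"
| "mat_pow n A (Suc k) = mat_mult n (mat_pow n A k) A"

definition mat_exp :: "nat \<Rightarrow> (nat \<Rightarrow> nat \<Rightarrow> complex) \<Rightarrow> (nat \<Rightarrow> nat \<Rightarrow> complex)" where
  "mat_exp n A = (\<lambda>i j. \<Sum>k. mat_pow n A k i j / of_nat (fact k))"

definition cycle_adj :: "nat \<Rightarrow> nat \<Rightarrow> nat \<Rightarrow> complex" where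
  "cycle_adj p i j = (if i < p \<and> j < p \<and> ((i + 1) mod p = j \<or> (j + 1) mod p = i) then 1 else 0)"

definition cycle_walk :: "nat \<Rightarrow> real \<Rightarrow> nat \<Rightarrow> nat \<Rightarrow> complex" where
  "cycle_walk p t a b = mat_exp p (\<lambda>i j. \<i> * complex_of_real t * cycle_adj p i j) a b"

end

theory Submission
  imports Defs "HOL-Computational_Algebra.Polynomial_Factorial"
begin

definition cyc :: "nat \<Rightarrow> int poly" where "cyc p = (\<Sum>k<p. monom 1 k)"

lemma coeff_cyc: "coeff (cyc p) j = (if j < p then 1 else 0)"
  unfolding cyc_def coeff_sum coeff_monom by (simp add: sum.delta')

lemma degree_cyc: "p > 0 \<Longrightarrow> degree (cyc p) = p - 1"
  by (intro antisym degree_le le_degree) (auto simp: coeff_cyc)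

lemma lead_cyc: "p > 0 \<Longrightarrow> lead_coeff (cyc p) = 1"
  by (simp add: degree_cyc coeff_cyc)

lemma cyc_mult: "cyc p * [:-1,1:] = monom 1 p - 1"
proof -
  have "cyc p * [:-1,1:] = (\<Sum>k<p. monom 1 (Suc k) - monom 1 k)"
    unfolding cyc_def sum_distrib_right
    by (intro sum.cong refl) (simp add: monom_altdef algebra_simps)
  also have "\<dots> = monom 1 p - monom 1 0"
    by (rule sum_lessThan_telescope)
  also have "monom 1 0 = (1::int poly)" by (simp add: monom_0 one_pCons)
  finally show ?thesis .
qed

lemma pcompose_monom1: "pcompose (monom (1::'a::comm_ring_1) n) q = q ^ n"
  by (induction n) (simp_all add: monom_Suc pcompose_pCons monom_0 pcompose_1 one_pCons[symmetric] mult.commute)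

lemma cyc_shift: "pCons 0 (pcompose (cyc p) [:1,1:]) = [:1,1:]^p - 1"
proof -
  have "pcompose (cyc p * [:-1,1:]) [:1,1:] = pcompose (monom 1 p - 1) [:1,1:]"
    by (simp only: cyc_mult)
  moreover have "pcompose (cyc p * [:-1,1:]) [:1,1:] = pcompose (cyc p) [:1,1:] * [:0,1:]"
  proof -
    have "pcompose [:-1,1:] [:1,1:] = ([:0,1:] :: int poly)" by (simp add: pcompose_pCons)
    then show ?thesis by (simp only: pcompose_mult)
  qed
  moreover have "pcompose (monom 1 p - 1) [:1,1:] = [:1,1:]^p - (1::int poly)"
    by (subst pcompose_diff) (simp only: pcompose_1 pcompose_monom1)
  ultimately show ?thesis by (simp add: mult_pCons_right)
qed

lemma coeff_cyc_shift:
  assumes "k < p"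
  shows "coeff (pcompose (cyc p) [:1,1:]) k = int (p choose (Suc k))"
proof -
  have "coeff (pCons 0 (pcompose (cyc p) [:1,1:])) (Suc k) = coeff ([:1,1:]^p - 1 :: int poly) (Suc k)"
    by (simp add: cyc_shift)
  also have "\<dots> = int (p choose Suc k)"
    using assms by (simp add: coeff_linear_poly_power)
  finally show ?thesis by simp
qed

lemma eis_aux:
  fixes G H :: "int poly" and q :: int
  assumes q: "prime q" and dv: "\<forall>k<degree (G*H). q dvd coeff (G*H) k"
    and H0: "\<not> q dvd coeff H 0" and dH: "degree H \<ge> 1"
    and lG: "\<not> q dvd lead_coeff G" and G0: "G \<noteq> 0"
  shows False
proof -
  have Hnz: "H \<noteq> 0" using dH by auto
  define i where "i = (LEAST i. \<not> q dvd coeff G i)"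
  have i: "\<not> q dvd coeff G i" unfolding i_def by (rule LeastI[of _ "degree G"]) (use lG in auto)
  have lt: "q dvd coeff G j" if "j < i" for j using not_less_Least[of j "\<lambda>i. \<not> q dvd coeff G i"] that
    unfolding i_def by blast
  have "i \<le> degree G" unfolding i_def by (rule Least_le) (use lG in auto)
  moreover have "degree (G*H) = degree G + degree H" using G0 Hnz by (rule degree_mult_eq)
  ultimately have "i < degree (G*H)" using dH by linarith
  with dv have d1: "q dvd coeff (G*H) i" by blast
  have "coeff (G*H) i = (\<Sum>j<i. coeff G j * coeff H (i-j)) + coeff G i * coeff H 0"
    unfolding coeff_mult lessThan_Suc_atMost[symmetric] by (simp add: sum.lessThan_Suc)
  moreover have "q dvd (\<Sum>j<i. coeff G j * coeff H (i-j))"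
    by (intro dvd_sum) (simp add: lt)
  ultimately have "q dvd coeff G i * coeff H 0" using d1 by (metis dvd_add_right_iff)
  with q i H0 show False by (simp add: prime_dvd_mult_iff)
qed

lemma eisenstein:
  fixes G H :: "int poly" and q :: int
  assumes q: "prime q" and dv: "\<forall>k<degree (G*H). q dvd coeff (G*H) k"
    and c0: "\<not> q^2 dvd coeff (G*H) 0" and l: "\<not> q dvd lead_coeff (G*H)"
  shows "degree G = 0 \<or> degree H = 0"
proof -
  have nz: "G*H \<noteq> 0" using l by auto
  hence Gnz: "G \<noteq> 0" and Hnz: "H \<noteq> 0" by auto
  have lGH: "\<not> q dvd lead_coeff G" "\<not> q dvd lead_coeff H" using l by (auto simp: lead_coeff_mult)
  have c0': "coeff (G*H) 0 = coeff G 0 * coeff H 0" by (simp add: coeff_mult)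
  show ?thesis
  proof (cases "q dvd coeff H 0")
    case False
    show ?thesis
    proof (rule ccontr)
      assume "\<not> ?thesis"
      hence "degree H \<ge> 1" by auto
      from eis_aux[OF q dv False this lGH(1) Gnz] show False .
    qed
  next
    case True
    have "\<not> q dvd coeff G 0"
    proof
      assume "q dvd coeff G 0"
      from this True have "q*q dvd coeff G 0 * coeff H 0" by (rule mult_dvd_mono)
      with c0 c0' show False by (simp add: power2_eq_square)
    qed
    show ?thesis
    proof (rule ccontr)
      assume "\<not> ?thesis"
      hence "degree G \<ge> 1" by auto
      have dv': "\<forall>k<degree (H*G). q dvd coeff (H*G) k" using dv by (simp add: mult.commute)
      from eis_aux[OF q dv' \<open>\<not> q dvd coeff G 0\<close> \<open>degree G \<ge> 1\<close> lGH(2) Hnz] show False .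
    qed
  qed
qed

lemma irreducible_cyc:
  assumes p: "prime p"
  shows "irreducible (cyc p)"
proof (rule irreducibleI)
  have p2: "p \<ge> 2" using p prime_ge_2_nat by blast
  show "cyc p \<noteq> 0" using lead_cyc[of p] p2 by auto
  show "\<not> cyc p dvd 1"
  proof
    assume "cyc p dvd 1"
    then obtain c where "cyc p = [:c:]" by (auto simp: is_unit_poly_iff)
    hence "degree (cyc p) = 0" by simp
    with degree_cyc[of p] p2 show False by simp
  qed
next
  fix a b assume ab: "cyc p = a * b"
  have p2: "p \<ge> 2" using p prime_ge_2_nat by blast
  define X :: "int poly" where "X = [:1,1:]"
  have dX: "degree X = 1" by (simp add: X_def)
  define \<Psi> where "\<Psi> = pcompose (cyc p) X"
  have \<Psi>: "\<Psi> = pcompose a X * pcompose b X" unfolding \<Psi>_def ab by (rule pcompose_mult)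
  have dPsi: "degree \<Psi> = p - 1" unfolding \<Psi>_def using p2 by (simp add: degree_pcompose dX degree_cyc[of p])
  have cPsi: "coeff \<Psi> k = int (p choose Suc k)" if "k < p" for k
    unfolding \<Psi>_def X_def using that by (rule coeff_cyc_shift)
  have qp: "prime (int p)" using p by simp
  have "degree (pcompose a X) = 0 \<or> degree (pcompose b X) = 0"
  proof (rule eisenstein[OF qp])
    show "\<forall>k<degree (pcompose a X * pcompose b X). int p dvd coeff (pcompose a X * pcompose b X) k"
    proof (intro allI impI)
      fix k assume "k < degree (pcompose a X * pcompose b X)"
      hence k: "Suc k < p" using dPsi \<Psi> p2 by simp
      have "p dvd (p choose Suc k)" by (rule dvd_choose_prime) (use k p p2 in auto)
      then show "int p dvd coeff (pcompose a X * pcompose b X) k"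
        using cPsi[of k] k \<Psi> by simp
    qed
    have "coeff \<Psi> 0 = int p" using cPsi[of 0] p2 by simp
    moreover have "\<not> (int p)^2 dvd int p"
    proof
      assume "(int p)^2 dvd int p"
      hence "int p * int p dvd int p * 1" by (simp add: power2_eq_square)
      hence "int p dvd 1" using p2 by (subst (asm) dvd_times_left_cancel_iff) auto
      thus False using p2 by simp
    qed
    ultimately show "\<not> (int p)^2 dvd coeff (pcompose a X * pcompose b X) 0" using \<Psi> by simp
    have "lead_coeff \<Psi> = 1" using dPsi cPsi[of "p-1"] p2 by simp
    thus "\<not> int p dvd lead_coeff (pcompose a X * pcompose b X)" using \<Psi> p2 by simp
  qed
  hence "degree a = 0 \<or> degree b = 0" by (simp add: degree_pcompose dX)
  moreover have "lead_coeff a * lead_coeff b = 1" using lead_cyc[of p] p2 ab by (simp add: lead_coeff_mult)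
  ultimately show "a dvd 1 \<or> b dvd 1"
  proof (elim disjE)
    assume "degree a = 0" "lead_coeff a * lead_coeff b = 1"
    then have "a = [:lead_coeff a:]" by (auto elim: degree_eq_zeroE)
    moreover have "lead_coeff a dvd 1" using \<open>lead_coeff a * lead_coeff b = 1\<close> by (metis dvdI)
    ultimately show ?thesis by (metis is_unit_const_poly_iff)
  next
    assume "degree b = 0" "lead_coeff a * lead_coeff b = 1"
    then have "b = [:lead_coeff b:]" by (auto elim: degree_eq_zeroE)
    moreover have "lead_coeff b dvd 1" using \<open>lead_coeff a * lead_coeff b = 1\<close> by (metis dvdI mult.commute)
    ultimately show ?thesis by (metis is_unit_const_poly_iff)
  qed
qed

lemma mpi_mult: "map_poly (of_int :: int \<Rightarrow> 'a::comm_ring_1) (a*b) = map_poly of_int a * map_poly of_int b"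
  by (simp add: poly_eq_iff coeff_map_poly coeff_mult)
lemma mpi_add: "map_poly (of_int :: int \<Rightarrow> 'a::comm_ring_1) (a+b) = map_poly of_int a + map_poly of_int b"
  by (simp add: poly_eq_iff coeff_map_poly)
lemma mpi_smult: "map_poly (of_int :: int \<Rightarrow> 'a::comm_ring_1) (smult c b) = smult (of_int c) (map_poly of_int b)"
  by (simp add: poly_eq_iff coeff_map_poly)
lemma mpi_const: "map_poly (of_int :: int \<Rightarrow> 'a::comm_ring_1) [:c:] = [:of_int c:]"
  by (simp add: poly_eq_iff coeff_map_poly coeff_pCons split: nat.split)

lemma cyc_root_min:
  fixes z :: complex
  assumes p: "prime p" and cz: "poly (map_poly of_int (cyc p)) z = 0"
    and Qz: "poly (map_poly of_int Q) z = 0" and dQ: "degree Q < p - 1"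
  shows "Q = 0"
proof (rule ccontr)
  assume Qnz: "Q \<noteq> 0"
  have p2: "p \<ge> 2" using p prime_ge_2_nat by blast
  define P where "P = (\<lambda>g::int poly. g \<noteq> 0 \<and> poly (map_poly of_int g) z = 0)"
  have PQ: "P Q" using Qnz Qz by (simp add: P_def)
  define d where "d = (LEAST d. \<exists>g. P g \<and> degree g = d)"
  have "\<exists>g. P g \<and> degree g = d" unfolding d_def by (rule LeastI[of _ "degree Q"]) (use PQ in auto)
  then obtain g where Pg: "P g" and dg: "degree g = d" by blast
  have dmin: "degree h \<ge> d" if "P h" for h unfolding d_def by (rule Least_le) (use that in auto)
  have gnz: "g \<noteq> 0" and gz: "poly (map_poly of_int g) z = 0" using Pg by (auto simp: P_def)
  have dgQ: "degree g \<le> degree Q" using dmin[OF PQ] dg by simp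
  define r where "r = pseudo_mod (cyc p) g"
  obtain a q where a: "a \<noteq> 0" and eq: "smult a (cyc p) = g * q + r"
    using pseudo_mod(1)[OF gnz, of "cyc p"] unfolding r_def by blast
  have rdeg: "r = 0 \<or> degree r < degree g" using pseudo_mod(2)[OF gnz, of "cyc p"] unfolding r_def by blast
  have "poly (map_poly of_int (smult a (cyc p))) z = poly (map_poly of_int (g*q+r)) z" by (simp only: eq)
  hence rz: "poly (map_poly of_int r) z = 0" using cz gz by (simp add: mpi_mult mpi_add mpi_smult)
  have r0: "r = 0"
  proof (rule ccontr)
    assume "r \<noteq> 0"
    hence "P r" using rz by (simp add: P_def)
    hence "degree r \<ge> d" by (rule dmin)
    with rdeg \<open>r \<noteq> 0\<close> dg show False by simp
  qed
  have "cyc p dvd g * q"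
  proof -
    have "g * q = cyc p * [:a:]" using eq r0 by simp
    thus ?thesis by (metis dvd_triv_left)
  qed
  moreover have "prime_elem (cyc p)" by (rule irreducible_imp_prime_poly[OF irreducible_cyc[OF p]])
  ultimately have "cyc p dvd g \<or> cyc p dvd q" by (simp add: prime_elem_dvd_mult_iff)
  thus False
  proof
    assume "cyc p dvd g"
    hence "degree (cyc p) \<le> degree g" using gnz by (rule dvd_imp_degree_le)
    with dgQ dQ degree_cyc[of p] p2 show False by simp
  next
    assume "cyc p dvd q"
    then obtain s where s: "q = cyc p * s" by (rule dvdE)
    have cnz: "cyc p \<noteq> 0" using lead_cyc[of p] p2 by auto
    have "cyc p * [:a:] = smult a (cyc p)" by simp
    also have "\<dots> = g * q" using eq r0 by simp
    also have "\<dots> = cyc p * (g * s)" using s by (simp add: mult_ac)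
    finally have gs: "[:a:] = g * s" using cnz by (metis mult_left_cancel)
    hence snz: "s \<noteq> 0" using a by auto
    have "degree g = 0" using degree_mult_eq[OF gnz snz] gs[symmetric] by (metis add_is_0 degree_pCons_0)
    then obtain c where gc: "g = [:c:]" by (auto elim: degree_eq_zeroE)
    with gnz gz show False by (simp add: mpi_const)
  qed
qed

definition ee :: "nat \<Rightarrow> nat \<Rightarrow> int \<Rightarrow> complex" where
  "ee p k d = cis (2 * pi * real k * real_of_int d / real p)"

lemma cis_int_eq_1:
  assumes "p > 0" "cis (2 * pi * real_of_int d / real p) = 1"
  shows "int p dvd d"
proof -
  have "exp (\<i> * complex_of_real (2 * pi * real_of_int d / real p)) = 1"
    using assms(2) by (simp add: cis_conv_exp)
  then obtain n :: int where n: "2 * pi * real_of_int d / real p = of_int (2 * n) * pi"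
    by (auto simp: exp_eq_1)
  hence "real_of_int d = real_of_int (n * int p)" using assms(1) by (simp add: field_simps)
  hence "d = n * int p" by linarith
  thus ?thesis by simp
qed

lemma orth:
  assumes "p > 0"
  shows "(\<Sum>k<p. ee p k d) = (if int p dvd d then of_nat p else 0)"
proof -
  define z where "z = cis (2 * pi * real_of_int d / real p)"
  have ek: "ee p k d = z ^ k" for k unfolding z_def Complex.DeMoivre ee_def by (rule arg_cong[where f=cis]) (simp add: field_simps)
  have zp: "z ^ p = 1" unfolding z_def Complex.DeMoivre using assms
    by (simp add: field_simps) (metis cis_multiple_2pi Ints_of_int mult.assoc mult.commute)
  show ?thesis
  proof (cases "int p dvd d")
    case True
    then obtain c where c: "d = int p * c" by (rule dvdE)
    have "z = 1" unfolding z_def c using assms by (simp add: field_simps)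
      (metis cis_multiple_2pi Ints_of_int mult.assoc mult.commute)
    then show ?thesis using True by (simp add: ek)
  next
    case False
    hence "z \<noteq> 1" using cis_int_eq_1[OF assms] unfolding z_def by blast
    then show ?thesis using False by (simp add: ek sum_gp_strict zp)
  qed
qed

lemma mpi_sum: "map_poly (of_int :: int \<Rightarrow> 'a::comm_ring_1) (\<Sum>k\<in>A. f k) = (\<Sum>k\<in>A. map_poly of_int (f k))"
  by (simp add: poly_eq_iff coeff_map_poly coeff_sum)

lemma cis_pair: "cis t + cis (2 * pi - t) = complex_of_real (2 * cos t)"
  by (simp add: complex_eq_iff)

lemma cos_indep:
  assumes p: "prime p" and m: "p = 2*m+1"
    and sum0: "(\<Sum>k<m. real_of_int (n k) * cos (2*pi*real (Suc k)/real p)) = 0"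
  shows "\<forall>k<m. n k = 0"
proof -
  have p2: "p \<ge> 2" using p prime_ge_2_nat by blast
  hence m1: "m \<ge> 1" using m by simp
  define z where "z = cis (2*pi/real p)"
  have zj: "z ^ j = cis (2*pi*real j/real p)" for j unfolding z_def Complex.DeMoivre by (simp add: mult_ac)
  define P :: "int poly" where "P = (\<Sum>k<m. monom (n k) (Suc k) + monom (n k) (p - 1 - k))"
  have trm: "z ^ Suc k + z ^ (p - 1 - k) = complex_of_real (2 * cos (2*pi*real (Suc k)/real p))" if "k < m" for k
  proof -
    have "real (p - 1 - k) = real p - real (Suc k)" using that m by simp
    hence "2*pi*real (p - 1 - k)/real p = 2 * pi - 2*pi*real (Suc k)/real p" using p2 by (simp add: field_simps)
    thus ?thesis unfolding zj by (simp only: cis_pair)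
  qed
  have "poly (map_poly of_int P) z = (\<Sum>k<m. of_int (n k) * (z ^ Suc k + z ^ (p - 1 - k)))"
    unfolding P_def mpi_sum by (simp add: mpi_add map_poly_monom poly_sum poly_monom algebra_simps)
  also have "\<dots> = (\<Sum>k<m. of_int (n k) * complex_of_real (2 * cos (2*pi*real (Suc k)/real p)))"
    by (intro sum.cong refl) (simp only: trm lessThan_iff)
  also have "\<dots> = complex_of_real (2 * (\<Sum>k<m. real_of_int (n k) * cos (2*pi*real (Suc k)/real p)))"
    by (simp add: sum_distrib_left mult_ac)
  finally have Pz0: "poly (map_poly of_int P) z = complex_of_real (2 * (\<Sum>k<m. real_of_int (n k) * cos (2*pi*real (Suc k)/real p)))" .
  have Pz: "poly (map_poly of_int P) z = 0" unfolding Pz0 sum0 by simp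
  have cz: "poly (map_poly of_int (cyc p)) z = 0"
  proof -
    have "poly (map_poly of_int (cyc p)) z = (\<Sum>k<p. z ^ k)"
      unfolding cyc_def mpi_sum by (simp add: map_poly_monom poly_sum poly_monom)
    also have "\<dots> = (\<Sum>k<p. ee p k 1)" by (intro sum.cong refl) (simp add: zj ee_def)
    also have "\<dots> = 0" using orth[of p 1] p2 by simp
    finally show ?thesis .
  qed
  have cP: "coeff P j = (\<Sum>k<m. (if j = Suc k then n k else 0) + (if j = p - 1 - k then n k else 0))" for j
    unfolding P_def coeff_sum by (intro sum.cong refl) (auto simp: coeff_monom)
  have cP0: "coeff P 0 = 0" unfolding cP using m by (intro sum.neutral) auto
  have cPtop: "coeff P (p - 1) = n 0"
  proof -
    have "coeff P (p - 1) = (\<Sum>k<m. if k = 0 then n k else 0)" unfolding cP using m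
      by (intro sum.cong refl) auto
    also have "\<dots> = n 0" using m1 by (simp add: sum.delta)
    finally show ?thesis .
  qed
  have cPk: "coeff P (Suc j) = n j" if "j < m" for j
  proof -
    have "coeff P (Suc j) = (\<Sum>k<m. if k = j then n k else 0)" unfolding cP using m that
      by (intro sum.cong refl) auto
    also have "\<dots> = n j" using that by (simp add: sum.delta)
    finally show ?thesis .
  qed
  have cPbig: "coeff P j = 0" if "j \<ge> p" for j unfolding cP using m that by (intro sum.neutral) auto
  define Q where "Q = P - smult (n 0) (cyc p)"
  have "degree Q \<le> p - 2"
  proof (rule degree_le, intro allI impI)
    fix i assume "p - 2 < i"
    hence "i = p - 1 \<or> i \<ge> p" by auto
    thus "coeff Q i = 0" unfolding Q_def using cPtop cPbig by (auto simp: coeff_cyc)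
  qed
  hence dQ: "degree Q < p - 1" using p2 by simp
  have Qz: "poly (map_poly of_int Q) z = 0"
  proof -
    have "P = Q + smult (n 0) (cyc p)" unfolding Q_def by simp
    hence "poly (map_poly of_int P) z = poly (map_poly of_int Q) z + of_int (n 0) * poly (map_poly of_int (cyc p)) z"
      by (simp add: mpi_add mpi_smult)
    thus ?thesis using Pz cz by simp
  qed
  have Q0: "Q = 0" by (rule cyc_root_min[OF p cz Qz dQ])
  have "n 0 = 0" using arg_cong[OF Q0, of "\<lambda>q. coeff q 0"] cP0 p2 unfolding Q_def by (simp add: coeff_cyc)
  hence "P = 0" using Q0 unfolding Q_def by simp
  thus ?thesis using cPk by auto
qed

definition lam :: "nat \<Rightarrow> nat \<Rightarrow> real" where "lam p k = 2 * cos (2 * pi * real k / real p)"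

lemma ee_period:
  assumes "p > 0" shows "ee p k (d + int p * e) = ee p k d"
proof -
  have "2 * pi * real k * real_of_int (d + int p * e) / real p
        = 2 * pi * real k * real_of_int d / real p + 2 * pi * real_of_int (int k * e)"
    using assms by (simp add: field_simps)
  thus ?thesis unfolding ee_def by (simp only: cis_mult[symmetric]) simp
qed

lemma ee_shift:
  "ee p k (d - 1) + ee p k (d + 1) = complex_of_real (lam p k) * ee p k d"
proof -
  define x where "x = 2 * pi * real k / real p"
  have a: "ee p k (d - 1) = ee p k d * cis (- x)" unfolding ee_def x_def cis_mult
    by (rule arg_cong[where f=cis]) (cases "p = 0"; simp add: field_simps)
  have b: "ee p k (d + 1) = ee p k d * cis x" unfolding ee_def x_def cis_mult
    by (rule arg_cong[where f=cis]) (cases "p = 0"; simp add: field_simps)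
  have "cis (- x) + cis x = complex_of_real (lam p k)" unfolding lam_def x_def
    by (simp add: complex_eq_iff)
  hence "ee p k d * cis (- x) + ee p k d * cis x = ee p k d * complex_of_real (lam p k)"
    by (simp only: distrib_left[symmetric])
  thus ?thesis unfolding a b by (simp only: mult.commute)
qed

lemma suc_mod: "(x::nat) < p \<Longrightarrow> (x + 1) mod p = (if x + 1 = p then 0 else x + 1)"
  using mod_less[of "x+1" p] by auto

lemma pred_mod: "(b::nat) < p \<Longrightarrow> (b + p - 1) mod p = (if b = 0 then p - 1 else b - 1)"
proof -
  assume b: "b < p"
  show ?thesis
  proof (cases "b = 0")
    case True thus ?thesis using b mod_less[of "p - 1" p] by simp
  next
    case False
    hence "b + p - 1 = (b - 1) + p" by simp
    hence "(b + p - 1) mod p = (b - 1) mod p" by simp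
    also have "\<dots> = b - 1" using b by (intro mod_less) simp
    finally show ?thesis using False by simp
  qed
qed

lemma adj_sum:
  assumes p3: "p \<ge> 3" and b: "b < p"
  shows "(\<Sum>c<p. f c * cycle_adj p c b) = f ((b + 1) mod p) + f ((b + p - 1) mod p)"
proof -
  define c1 where "c1 = (b + 1) mod p"
  define c2 where "c2 = (b + p - 1) mod p"
  have ne: "c1 \<noteq> c2" unfolding c1_def c2_def using suc_mod[OF b] pred_mod[OF b] p3 by auto
  have c12: "c1 < p" "c2 < p" unfolding c1_def c2_def using p3 by auto
  have A: "cycle_adj p c b = (if c = c1 then 1 else 0) + (if c = c2 then 1 else 0)" if "c < p" for c
    unfolding cycle_adj_def c1_def c2_def using that b ne p3
    unfolding c1_def c2_def suc_mod[OF b] suc_mod[OF that] pred_mod[OF b] by auto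
  have "(\<Sum>c<p. f c * cycle_adj p c b) = (\<Sum>c<p. (if c = c1 then f c else 0) + (if c = c2 then f c else 0))"
    by (intro sum.cong refl) (simp add: A distrib_left)
  also have "\<dots> = f c1 + f c2" using c12 by (simp add: sum.distrib sum.delta)
  finally show ?thesis unfolding c1_def c2_def .
qed

lemma ee_adj:
  assumes p3: "p \<ge> 3" and b: "b < p"
  shows "(\<Sum>c<p. ee p k (d - int c) * cycle_adj p c b) = complex_of_real (lam p k) * ee p k (d - int b)"
proof -
  have p0: "p > 0" using p3 by simp
  have 1: "ee p k (d - int ((b + 1) mod p)) = ee p k ((d - int b) - 1)"
  proof (cases "b + 1 = p")
    case True
    hence "d - int ((b + 1) mod p) = ((d - int b) - 1) + int p * 1" by simp
    thus ?thesis using ee_period[OF p0] by metis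
  next
    case False thus ?thesis using suc_mod[OF b] by (simp add: algebra_simps)
  qed
  have 2: "ee p k (d - int ((b + p - 1) mod p)) = ee p k ((d - int b) + 1)"
  proof (cases "b = 0")
    case True
    hence "d - int ((b + p - 1) mod p) = ((d - int b) + 1) + int p * (-1)" using p0 pred_mod[OF b] by simp
    thus ?thesis using ee_period[OF p0] by metis
  next
    case False thus ?thesis using pred_mod[OF b] by (simp add: algebra_simps of_nat_diff)
  qed
  show ?thesis unfolding adj_sum[OF p3 b] 1 2 using ee_shift[of p k "d - int b"] by (simp add: add.commute)
qed

lemma mat_pow_formula:
  assumes p3: "p \<ge> 3" and i: "i < p" and b: "b < p"
  shows "mat_pow p (\<lambda>i j. \<i> * complex_of_real t * cycle_adj p i j) n i b
    = (\<Sum>k<p. (\<i> * complex_of_real t * complex_of_real (lam p k))^n * ee p k (int i - int b)) / of_nat p"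
  using b
proof (induction n arbitrary: b)
  case 0
  have p0: "p > 0" using p3 by simp
  have "int p dvd (int i - int b) \<longleftrightarrow> i = b"
  proof
    assume d: "int p dvd (int i - int b)"
    show "i = b"
    proof (rule ccontr)
      assume "i \<noteq> b"
      hence "int i - int b \<noteq> 0" by simp
      from dvd_imp_le_int[OF this d] i 0 show False by simp
    qed
  qed simp
  thus ?case using p0 by (simp add: mat_id_def orth[OF p0])
next
  case (Suc n)
  define z where "z = (\<lambda>k. \<i> * complex_of_real t * complex_of_real (lam p k))"
  define A where "A = (\<lambda>c. cycle_adj p c b)"
  have "mat_pow p (\<lambda>i j. \<i> * complex_of_real t * cycle_adj p i j) (Suc n) i b
     = (\<Sum>c<p. (\<Sum>k<p. z k ^ n * ee p k (int i - int c)) / of_nat p * (\<i> * complex_of_real t * A c))"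
    by (simp add: mat_mult_def Suc.IH z_def A_def)
  also have "\<dots> = (\<Sum>c<p. \<Sum>k<p. (z k ^ n * (\<i> * complex_of_real t) / of_nat p) * (ee p k (int i - int c) * A c))"
    by (intro sum.cong refl) (simp add: sum_distrib_right sum_distrib_left sum_divide_distrib mult_ac)
  also have "\<dots> = (\<Sum>k<p. \<Sum>c<p. (z k ^ n * (\<i> * complex_of_real t) / of_nat p) * (ee p k (int i - int c) * A c))"
    by (rule sum.swap)
  also have "\<dots> = (\<Sum>k<p. (z k ^ n * (\<i> * complex_of_real t) / of_nat p) * (complex_of_real (lam p k) * ee p k (int i - int b)))"
    by (intro sum.cong refl) (simp only: sum_distrib_left[symmetric] A_def ee_adj[OF p3 Suc.prems])
  also have "\<dots> = (\<Sum>k<p. z k ^ Suc n * ee p k (int i - int b)) / of_nat p"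
    by (simp add: sum_divide_distrib z_def mult_ac)
  finally show ?case unfolding z_def .
qed

lemma cycle_walk_formula:
  assumes p3: "p \<ge> 3" and a: "a < p" and b: "b < p"
  shows "cycle_walk p t a b = (\<Sum>k<p. ee p k (int a - int b) / of_nat p * cis (t * lam p k))"
proof -
  define z where "z = (\<lambda>k. \<i> * complex_of_real t * complex_of_real (lam p k))"
  have "(\<lambda>n. mat_pow p (\<lambda>i j. \<i> * complex_of_real t * cycle_adj p i j) n a b / of_nat (fact n))
     = (\<lambda>n. \<Sum>k<p. ee p k (int a - int b) / of_nat p * (z k ^ n /\<^sub>R fact n))"
    by (rule ext, subst mat_pow_formula[OF p3 a b]) (simp add: z_def sum_divide_distrib scaleR_conv_of_real
        divide_inverse mult_ac sum_distrib_left)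
  moreover have "(\<lambda>n. \<Sum>k<p. ee p k (int a - int b) / of_nat p * (z k ^ n /\<^sub>R fact n))
      sums (\<Sum>k<p. ee p k (int a - int b) / of_nat p * exp (z k))"
    by (intro sums_sum sums_mult exp_converges)
  ultimately have "(\<lambda>n. mat_pow p (\<lambda>i j. \<i> * complex_of_real t * cycle_adj p i j) n a b / of_nat (fact n))
      sums (\<Sum>k<p. ee p k (int a - int b) / of_nat p * exp (z k))" by simp
  hence "cycle_walk p t a b = (\<Sum>k<p. ee p k (int a - int b) / of_nat p * exp (z k))"
    unfolding cycle_walk_def mat_exp_def by (rule sums_unique[symmetric])
  also have "\<dots> = (\<Sum>k<p. ee p k (int a - int b) / of_nat p * cis (t * lam p k))"
    by (simp add: z_def cis_conv_exp mult_ac)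
  finally show ?thesis .
qed

lemma abs_cos_diff: "\<bar>cos (x::real) - cos y\<bar> \<le> \<bar>x - y\<bar>"
proof -
  have "\<bar>cos x - cos y\<bar> = 2 * \<bar>sin ((x + y) / 2)\<bar> * \<bar>sin ((y - x) / 2)\<bar>"
    by (simp add: cos_diff_cos abs_mult)
  also have "\<dots> \<le> 2 * 1 * \<bar>(y - x) / 2\<bar>"
    by (intro mult_mono abs_sin_x_le_abs_x) auto
  finally show ?thesis by simp
qed

lemma abs_sin_diff: "\<bar>sin (x::real) - sin y\<bar> \<le> \<bar>x - y\<bar>"
proof -
  have "\<bar>sin x - sin y\<bar> = 2 * \<bar>sin ((x - y) / 2)\<bar> * \<bar>cos ((x + y) / 2)\<bar>"
    by (simp add: sin_diff_sin abs_mult)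
  also have "\<dots> \<le> 2 * \<bar>(x - y) / 2\<bar> * 1"
    by (intro mult_mono abs_sin_x_le_abs_x) auto
  finally show ?thesis by simp
qed

lemma cis_lip: "norm (cis x - cis y) \<le> 2 * \<bar>x - y\<bar>"
proof -
  have "norm (cis x - cis y) \<le> \<bar>Re (cis x - cis y)\<bar> + \<bar>Im (cis x - cis y)\<bar>" by (rule cmod_le)
  also have "\<dots> \<le> \<bar>x - y\<bar> + \<bar>x - y\<bar>" using abs_cos_diff[of x y] abs_sin_diff[of x y] by simp
  finally show ?thesis by simp
qed

lemma cis_period_int: "cis (x + 2 * pi * real_of_int h) = cis x"
proof -
  have "cis (x + 2 * pi * real_of_int h) = cis x * cis (2 * pi * real_of_int h)" by (simp only: cis_mult)
  moreover have "cis (2 * pi * real_of_int h) = 1" by (rule cis_multiple_2pi) simp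
  ultimately show ?thesis by simp
qed

lemma lam_sym: "k \<le> p \<Longrightarrow> p > 0 \<Longrightarrow> lam p (p - k) = lam p k"
proof -
  assume "k \<le> p" "p > 0"
  hence "2 * pi * real (p - k) / real p = 2 * pi - 2 * pi * real k / real p" by (simp add: field_simps of_nat_diff)
  thus ?thesis unfolding lam_def by simp
qed

lemma lam_sum_all: "p > 1 \<Longrightarrow> (\<Sum>k<p. lam p k) = 0"
proof -
  assume p1: "p > 1"
  hence p0: "p > 0" by simp
  have "(\<Sum>k<p. lam p k) = 2 * Re (\<Sum>k<p. ee p k 1)"
    unfolding lam_def ee_def by (simp add: sum_distrib_left Re_sum)
  also have "\<dots> = 0" using orth[OF p0, of 1] p1 by simp
  finally show ?thesis .
qed

lemma lam_sum_half:
  assumes m: "p = 2*m+1" and m1: "m \<ge> 1"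
  shows "(\<Sum>k<m. lam p (Suc k)) = -1"
proof -
  have p0: "p > 0" and p1: "p > 1" using m m1 by simp_all
  have split: "{..<p} = {0} \<union> Suc ` {..<m} \<union> (\<lambda>k. p - Suc k) ` {..<m}"
  proof (intro equalityI subsetI)
    fix x assume "x \<in> {..<p}"
    hence "x < p" by simp
    show "x \<in> {0} \<union> Suc ` {..<m} \<union> (\<lambda>k. p - Suc k) ` {..<m}"
    proof (cases "x = 0")
      case False
      show ?thesis
      proof (cases "x \<le> m")
        case True
        hence "x = Suc (x - 1)" "x - 1 < m" using False by auto
        thus ?thesis by blast
      next
        case False
        hence "x = p - Suc (p - 1 - x)" "p - 1 - x < m" using \<open>x < p\<close> m by auto
        thus ?thesis by blast
      qed
    qed simp
  qed (use m in auto)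
  have "(\<Sum>k<p. lam p k) = lam p 0 + (\<Sum>k\<in>Suc ` {..<m}. lam p k) + (\<Sum>k\<in>(\<lambda>k. p - Suc k) ` {..<m}. lam p k)"
    unfolding split using m
    by (subst sum.union_disjoint; (subst sum.union_disjoint)?) auto
  also have "(\<Sum>k\<in>Suc ` {..<m}. lam p k) = (\<Sum>k<m. lam p (Suc k))"
    by (subst sum.reindex) auto
  also have "(\<Sum>k\<in>(\<lambda>k. p - Suc k) ` {..<m}. lam p k) = (\<Sum>k<m. lam p (p - Suc k))"
    using m by (subst sum.reindex) (auto simp: inj_on_def)
  also have "\<dots> = (\<Sum>k<m. lam p (Suc k))"
    by (intro sum.cong refl lam_sym) (use m in auto)
  finally have "0 = lam p 0 + 2 * (\<Sum>k<m. lam p (Suc k))" using lam_sum_all[OF p1] by simp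
  moreover have "lam p 0 = 2" unfolding lam_def by simp
  ultimately show ?thesis by simp
qed

lemma theta_inj:
  assumes m: "p = 2*m+1"
  shows "inj_on (\<lambda>k. lam p (Suc k) / (2*pi)) {..<m}"
proof (rule inj_onI)
  fix x y assume x: "x \<in> {..<m}" and y: "y \<in> {..<m}"
    and e: "lam p (Suc x) / (2*pi) = lam p (Suc y) / (2*pi)"
  have p0: "real p > 0" using m by simp
  have c: "cos (2 * pi * real (Suc x) / real p) = cos (2 * pi * real (Suc y) / real p)"
    using e unfolding lam_def by simp
  have bx: "2 * pi * real (Suc x) / real p \<le> pi" and byy: "2 * pi * real (Suc y) / real p \<le> pi"
  proof -
    have hx: "pi * (2*real x + 1) \<le> pi * (2*real m)" using x by (intro mult_left_mono) auto
    have hy: "pi * (2*real y + 1) \<le> pi * (2*real m)" using y by (intro mult_left_mono) auto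
    show "2 * pi * real (Suc x) / real p \<le> pi" "2 * pi * real (Suc y) / real p \<le> pi"
      using hx hy m p0 by (simp_all add: field_simps)
  qed
  have "2 * pi * real (Suc x) / real p = 2 * pi * real (Suc y) / real p"
    by (rule cos_inj_pi[OF _ bx _ byy c]) (use p0 in simp_all)
  thus "x = y" using p0 by (simp add: field_simps)
qed

lemma theta_indep:
  assumes p: "prime p" and m: "p = 2*m+1"
  shows "module.independent (\<lambda>r. (*) (real_of_int r)) ((\<lambda>k. lam p (Suc k) / (2*pi)) ` {..<m})"
proof -
  interpret Modules.module "(\<lambda>r. (*) (real_of_int r))"
    by (simp add: Modules.module.intro distrib_left mult.commute)
  define \<theta> where "\<theta> = (\<lambda>k. lam p (Suc k) / (2*pi))"
  have inj: "inj_on \<theta> {..<m}" unfolding \<theta>_def by (rule theta_inj[OF m])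
  show ?thesis unfolding \<theta>_def[symmetric] independent_explicit_module
  proof (intro allI impI)
    fix t u v assume t: "finite t" "t \<subseteq> \<theta> ` {..<m}" "(\<Sum>v\<in>t. real_of_int (u v) * v) = 0" "v \<in> t"
    define n where "n = (\<lambda>k. if \<theta> k \<in> t then u (\<theta> k) else 0)"
    define S where "S = {k \<in> {..<m}. \<theta> k \<in> t}"
    have tS: "t = \<theta> ` S" using t(2) unfolding S_def by auto
    have injS: "inj_on \<theta> S" using inj unfolding S_def by (rule inj_on_subset) auto
    have "(\<Sum>v\<in>t. real_of_int (u v) * v) = (\<Sum>k\<in>S. real_of_int (u (\<theta> k)) * \<theta> k)"
      unfolding tS by (rule sum.reindex[OF injS, unfolded comp_def])
    also have "\<dots> = (\<Sum>k<m. real_of_int (n k) * \<theta> k)"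
      unfolding S_def n_def by (subst sum.inter_filter) (auto intro!: sum.cong)
    finally have "(\<Sum>k<m. real_of_int (n k) * \<theta> k) = 0" using t(3) by simp
    hence "(\<Sum>k<m. real_of_int (n k) * \<theta> k) * pi = 0" by simp
    hence "(\<Sum>k<m. real_of_int (n k) * cos (2*pi*real (Suc k)/real p)) = 0"
      unfolding sum_distrib_right \<theta>_def lam_def by simp
    hence n0: "\<forall>k<m. n k = 0" by (rule cos_indep[OF p m])
    from t(2) t(4) obtain k where k: "k < m" "v = \<theta> k" by auto
    show "u v = 0" using n0 k t(4) unfolding n_def by auto
  qed
qed

lemma approx:
  assumes p: "prime p" and m: "p = 2*m+1" and m1: "m \<ge> 1" and eps: "\<epsilon> > 0"
  shows "\<exists>t\<ge>T. \<forall>k<p. \<exists>h::int. \<bar>t * lam p k - (t0 * lam p k + 2*pi*real j/real p) - 2*pi*real_of_int h\<bar> < \<epsilon>"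
proof -
  define \<theta> where "\<theta> = (\<lambda>k. lam p (Suc k) / (2*pi))"
  define \<alpha> where "\<alpha> = (\<lambda>k. t0 * \<theta> k + real j / real p)"
  define \<delta> where "\<delta> = \<epsilon> / (8 * pi * real m)"
  have dpos: "\<delta> > 0" unfolding \<delta>_def using eps m1 by simp
  have indep: "module.independent (\<lambda>r. (*) (real_of_int r)) (\<theta> ` {..<m})"
    unfolding \<theta>_def by (rule theta_indep[OF p m])
  have inj: "inj_on \<theta> {..<m}" unfolding \<theta>_def by (rule theta_inj[OF m])
  obtain t' h where h: "\<And>i. i < m \<Longrightarrow> \<bar>t' * \<theta> i - of_int (h i) - \<alpha> i\<bar> < \<delta>"
    using Kronecker_thm_1[OF indep inj dpos] by blast
  obtain N :: nat where N: "N > 0" "inverse (real N) < \<delta>" using ex_inverse_of_nat_less[OF dpos] by blast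
  define K :: nat where "K = nat \<lceil>T + \<bar>t'\<bar>\<rceil> + 1"
  have K: "real K \<ge> T + \<bar>t'\<bar>" unfolding K_def by linarith
  obtain q P where q: "0 < q" and P: "\<And>i. i < m \<Longrightarrow> \<bar>of_int q * (real K * \<theta> i) - of_int (P i)\<bar> < 1 / real N"
    using Dirichlet_approx_simult[OF N(1), where \<theta>="\<lambda>i. real K * \<theta> i" and n=m] by blast
  define t where "t = t' + real_of_int q * real K"
  have "real_of_int q * real K \<ge> 1 * real K" using q by (intro mult_right_mono) auto
  hence tT: "t \<ge> T" unfolding t_def using K by linarith
  define H where "H = (\<lambda>i. h i + P i)"
  have E: "\<bar>t * \<theta> i - of_int (H i) - \<alpha> i\<bar> < 2 * \<delta>" if i: "i < m" for i
  proof -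
    have "t * \<theta> i - of_int (H i) - \<alpha> i = (t' * \<theta> i - of_int (h i) - \<alpha> i) + (of_int q * (real K * \<theta> i) - of_int (P i))"
      unfolding t_def H_def by (simp add: algebra_simps)
    moreover have "1 / real N < \<delta>" using N by (simp add: divide_inverse)
    ultimately show ?thesis using h[OF i] P[OF i] by linarith
  qed
  define D where "D = (\<lambda>i. t * lam p (Suc i) - (t0 * lam p (Suc i) + 2*pi*real j/real p) - 2*pi*real_of_int (H i))"
  have D: "\<bar>D i\<bar> < 4 * pi * \<delta>" if i: "i < m" for i
  proof -
    have "D i = 2 * pi * (t * \<theta> i - of_int (H i) - \<alpha> i)"
      unfolding D_def \<theta>_def \<alpha>_def by (simp add: field_simps)
    hence "\<bar>D i\<bar> = 2 * pi * \<bar>t * \<theta> i - of_int (H i) - \<alpha> i\<bar>" by (simp add: abs_mult)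
    also have "\<dots> < 2 * pi * (2 * \<delta>)" using E[OF i] by (intro mult_strict_left_mono) auto
    finally show ?thesis by simp
  qed
  have small: "4 * pi * \<delta> \<le> \<epsilon>"
  proof -
    have "4 * pi * \<delta> = \<epsilon> / (2 * real m)" unfolding \<delta>_def using m1 by (simp add: field_simps)
    also have "\<dots> \<le> \<epsilon>" using m1 eps by (simp add: field_simps)
    finally show ?thesis .
  qed
  have "\<forall>k<p. \<exists>h::int. \<bar>t * lam p k - (t0 * lam p k + 2*pi*real j/real p) - 2*pi*real_of_int h\<bar> < \<epsilon>"
  proof (intro allI impI)
    fix k assume k: "k < p"
    consider "k = 0" | "1 \<le> k" "k \<le> m" | "m < k" by linarith
    then show "\<exists>h::int. \<bar>t * lam p k - (t0 * lam p k + 2*pi*real j/real p) - 2*pi*real_of_int h\<bar> < \<epsilon>"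
    proof cases
      case 1
      have L: "(\<Sum>i<m. lam p (Suc i)) = -1" by (rule lam_sum_half[OF m m1])
      have l0: "lam p 0 = 2" unfolding lam_def by simp
      have SD: "(\<Sum>i<m. D i) = t * (\<Sum>i<m. lam p (Suc i)) - t0 * (\<Sum>i<m. lam p (Suc i))
          - real m * (2*pi*real j/real p) - 2 * pi * (\<Sum>i<m. real_of_int (H i))"
        unfolding D_def by (simp add: sum_subtractf sum.distrib sum_distrib_left)
      have key: "t * lam p 0 - (t0 * lam p 0 + 2*pi*real j/real p) - 2*pi*real_of_int (- (int j + 2 * (\<Sum>i<m. H i)))
          = - 2 * (\<Sum>i<m. D i)"
        unfolding SD L l0 using m by (simp add: field_simps)
      have "\<bar>\<Sum>i<m. D i\<bar> \<le> (\<Sum>i<m. \<bar>D i\<bar>)" by (rule sum_abs)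
      also have "\<dots> < (\<Sum>i<m. 4 * pi * \<delta>)" using m1 by (intro sum_strict_mono) (auto intro: D simp: lessThan_empty_iff)
      also have "\<dots> = real m * (4 * pi * \<delta>)" by simp
      finally have "\<bar>- 2 * (\<Sum>i<m. D i)\<bar> < 2 * real m * (4 * pi * \<delta>)" by (simp add: abs_mult mult_ac)
      also have "2 * real m * (4 * pi * \<delta>) = \<epsilon>" unfolding \<delta>_def using m1 by (simp add: field_simps)
      finally have bound: "\<bar>- 2 * (\<Sum>i<m. D i)\<bar> < \<epsilon>" .
      show ?thesis unfolding 1 by (rule exI[of _ "- (int j + 2 * (\<Sum>i<m. H i))"], subst key, rule bound)
    next
      case 2
      define i where "i = k - 1"
      have i: "k = Suc i" "i < m" using 2 unfolding i_def by auto
      show ?thesis using D[OF i(2)] small unfolding D_def i(1) by (intro exI[of _ "H i"]) linarith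
    next
      case 3
      define i where "i = p - 1 - k"
      have i: "i < m" "k = p - Suc i" using 3 k m unfolding i_def by auto
      have lk: "lam p k = lam p (Suc i)" unfolding i(2) by (rule lam_sym) (use m i(1) in auto)
      show ?thesis unfolding lk using D[OF i(1)] small unfolding D_def by (intro exI[of _ "H i"]) linarith
    qed
  qed
  thus ?thesis using tT by blast
qed

lemma near_point:
  assumes p: "prime p" "odd p" and a: "a < p" and b: "b < p" and t0: "t0 \<ge> 0" and e: "e > 0"
  shows "\<exists>t\<ge>T. dist (cycle_walk p t a b) (cis (2 * pi / real p) ^ j * cycle_walk p t0 a b) < e"
proof -
  have p2: "p \<ge> 2" using p prime_ge_2_nat by blast
  have p3: "p \<ge> 3" using p2 p(2) by (cases "p = 2") auto
  define m where "m = (p - 1) div 2"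
  have m: "p = 2*m+1" using p(2) unfolding m_def by (auto elim!: oddE)
  have m1: "m \<ge> 1" using m p3 by simp
  have e2: "e / 2 > 0" using e by simp
  obtain t where tT: "t \<ge> T" and H: "\<forall>k<p. \<exists>h::int. \<bar>t * lam p k - (t0 * lam p k + 2*pi*real j/real p) - 2*pi*real_of_int h\<bar> < e / 2"
    using approx[OF p(1) m m1 e2] by blast
  define c where "c = (\<lambda>k. ee p k (int a - int b) / of_nat p)"
  have nc: "norm (c k) = 1 / real p" for k unfolding c_def ee_def by (simp add: norm_divide)
  have Ft: "cycle_walk p t a b = (\<Sum>k<p. c k * cis (t * lam p k))"
    unfolding c_def by (rule cycle_walk_formula[OF p3 a b])
  have "cis (2 * pi / real p) ^ j * cycle_walk p t0 a b = (\<Sum>k<p. c k * cis (t0 * lam p k + 2*pi*real j/real p))"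
    unfolding c_def cycle_walk_formula[OF p3 a b] Complex.DeMoivre sum_distrib_left
    by (intro sum.cong refl) (simp add: cis_mult[symmetric] mult_ac)
  hence "dist (cycle_walk p t a b) (cis (2 * pi / real p) ^ j * cycle_walk p t0 a b)
      = norm (\<Sum>k<p. c k * (cis (t * lam p k) - cis (t0 * lam p k + 2*pi*real j/real p)))"
    unfolding Ft dist_norm by (simp add: sum_subtractf algebra_simps)
  also have "\<dots> \<le> (\<Sum>k<p. norm (c k * (cis (t * lam p k) - cis (t0 * lam p k + 2*pi*real j/real p))))"
    by (rule norm_sum)
  also have "\<dots> < (\<Sum>k<p. 1 / real p * e)"
  proof (rule sum_strict_mono)
    show "finite {..<p}" by simp
    show "{..<p} \<noteq> {}" using p2 by (auto simp: lessThan_empty_iff)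
  next
    fix k assume "k \<in> {..<p}"
    then obtain h :: int where h: "\<bar>t * lam p k - (t0 * lam p k + 2*pi*real j/real p) - 2*pi*real_of_int h\<bar> < e / 2"
      using H by auto
    have "norm (cis (t * lam p k) - cis (t0 * lam p k + 2*pi*real j/real p))
        = norm (cis (t * lam p k) - cis ((t0 * lam p k + 2*pi*real j/real p) + 2 * pi * real_of_int h))"
      by (simp only: cis_period_int)
    also have "\<dots> \<le> 2 * \<bar>t * lam p k - ((t0 * lam p k + 2*pi*real j/real p) + 2 * pi * real_of_int h)\<bar>"
      by (rule cis_lip)
    also have "\<dots> < e" using h by (simp add: algebra_simps)
    finally have "norm (cis (t * lam p k) - cis (t0 * lam p k + 2*pi*real j/real p)) < e" .
    thus "norm (c k * (cis (t * lam p k) - cis (t0 * lam p k + 2*pi*real j/real p))) < 1 / real p * e"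
      unfolding norm_mult nc using p2 by (intro mult_strict_left_mono) auto
  qed
  also have "\<dots> = e" using p2 by simp
  finally show ?thesis using tT by blast
qed

theorem theorem4p2:
  fixes p a b :: nat
  assumes "prime p" and "odd p" and "a < p" and "b < p"
  shows "\<exists>R :: complex set.
           (\<forall>t\<ge>0. cycle_walk p t a b \<in> R) \<and>
           (\<forall>T::real. R \<subseteq> closure ((\<lambda>t. cycle_walk p t a b) ` {T..})) \<and>
           (\<lambda>z. cis (2 * pi / real p) * z) ` R = R"
proof -
  define w where "w = cis (2 * pi / real p)"
  have p0: "p > 0" using assms(1) prime_gt_0_nat by blast
  have wp: "w ^ p = 1" unfolding w_def Complex.DeMoivre using p0 by simp
  define R where "R = {w ^ j * cycle_walk p t a b | j t. t \<ge> 0}"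
  have 1: "\<forall>t\<ge>0. cycle_walk p t a b \<in> R"
  proof (intro allI impI)
    fix t :: real assume "t \<ge> 0"
    thus "cycle_walk p t a b \<in> R" unfolding R_def by (intro CollectI exI[of _ "0::nat"] exI[of _ t]) simp
  qed
  have 2: "\<forall>T::real. R \<subseteq> closure ((\<lambda>t. cycle_walk p t a b) ` {T..})"
  proof (intro allI subsetI)
    fix T :: real and z assume "z \<in> R"
    then obtain j t0 where z: "z = w ^ j * cycle_walk p t0 a b" and t0: "t0 \<ge> 0" unfolding R_def by blast
    show "z \<in> closure ((\<lambda>t. cycle_walk p t a b) ` {T..})"
      unfolding closure_approachable
    proof (intro allI impI)
      fix e :: real assume "e > 0"
      from near_point[OF assms t0 this, of T j] obtain t where "t \<ge> T"
        "dist (cycle_walk p t a b) z < e" unfolding z w_def by blast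
      thus "\<exists>y\<in>(\<lambda>t. cycle_walk p t a b) ` {T..}. dist y z < e" by auto
    qed
  qed
  have 3: "(\<lambda>z. w * z) ` R = R"
  proof (intro equalityI subsetI)
    fix z assume "z \<in> (\<lambda>z. w * z) ` R"
    then obtain j t where "z = w * (w ^ j * cycle_walk p t a b)" "t \<ge> 0" unfolding R_def by blast
    thus "z \<in> R" unfolding R_def by (intro CollectI exI[of _ "Suc j"] exI[of _ t]) (simp add: mult.assoc)
  next
    fix z assume "z \<in> R"
    then obtain j t where z: "z = w ^ j * cycle_walk p t a b" and t: "t \<ge> 0" unfolding R_def by blast
    have "w ^ (j + p - 1) * cycle_walk p t a b \<in> R" unfolding R_def using t by blast
    moreover have "z = w * (w ^ (j + p - 1) * cycle_walk p t a b)"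
    proof -
      have "w * w ^ (j + p - 1) = w ^ (j + p)" using p0 by (simp add: power_Suc[symmetric] del: power_Suc)
      also have "\<dots> = w ^ j" by (simp add: power_add wp)
      finally show ?thesis unfolding z by (simp add: mult.assoc)
    qed
    ultimately show "z \<in> (\<lambda>z. w * z) ` R" by blast
  qed
  show ?thesis using 1 2 3 unfolding w_def by blast
qed

end
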